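(* Let $a,b,c$ be indeterminates, and let $\{U_n(x)\}_{n\ge 0}$ be the Chebyshev polynomials of the second kind, defined by $\sum_{n=0}^{\infty} U_n(x)t^n = \frac{1}{1-2xt+t^2}$. Then, as formal power series in $t$, $$\sum_{n=0}^{\infty} U_n(a)U_n(b)U_n(c)\, t^n = \frac{N(t)}{D(t)},$$ where $$N(t)=1+(-4a^2-4b^2-4c^2+3)t^2+16abc\,t^3+(-4a^2-4b^2-4c^2+3)t^4+t^6,$$ and $$\begin{aligned}D(t)={}&t^8-8abc\,t^7+(16a^2b^2+16a^2c^2-8a^2+16b^2c^2-8b^2-8c^2+4)t^6\\ &+(-32a^3bc+40abc-32ab^3c-32abc^3)t^5\\ &+(16a^4+64a^2b^2c^2-16a^2+16b^4-16b^2+6+16c^4-16c^2)t^4\\ &+(-32a^3bc+40abc-32ab^3c-32abc^3)t^3\\ &+(16a^2b^2+16a^2c^2-8a^2+16b^2c^2-8b^2-8c^2+4)t^2-8abc\,t+1.\end{aligned}$$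
   Context: The identity is between formal power series in $t$ whose coefficients are polynomials in $a,b,c$; $U_n(x)$ is the polynomial in $x$ given as the coefficient of $t^n$ in $1/(1-2xt+t^2)$. *)

theory Defs
  imports "HOL-Computational_Algebra.Formal_Power_Series"
begin

definition chebU :: "'a::field \<Rightarrow> nat \<Rightarrow> 'a" where
  "chebU x n = fps_nth (inverse (1 - fps_const (2 * x) * fps_X + fps_X ^ 2)) n"

end

theory Submission
  imports Defs
begin

fun U :: "'a::field \<Rightarrow> nat \<Rightarrow> 'a" where
  "U x 0 = 1"
| "U x (Suc 0) = 2*x"
| "U x (Suc (Suc n)) = 2*x*U x (Suc n) - U x n"

lemma U_rec: "U x (n+2) = 2*x*U x (n+1) - U x n"
  by (simp add: numeral_2_eq_2)

lemma U_fps: "(1 - fps_const (2 * x) * fps_X + fps_X ^ 2) * Abs_fps (U x) = 1"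
proof (rule fps_ext)
  fix n
  show "fps_nth ((1 - fps_const (2 * x) * fps_X + fps_X ^ 2) * Abs_fps (U x)) n = fps_nth (1::'a fps) n"
  proof (cases n)
    case 0 then show ?thesis by (simp add: algebra_simps)
  next
    case (Suc m) then show ?thesis
    proof (cases m)
      case 0 with Suc show ?thesis by (simp add: algebra_simps fps_X_power_mult_nth fps_X_power_mult_right_nth)
    next
      case (Suc k) with \<open>n = Suc m\<close> show ?thesis
        by (simp add: algebra_simps fps_X_power_mult_nth fps_X_power_mult_right_nth)
    qed
  qed
qed

lemma chebU_U: "chebU x n = U x n"
proof -
  have "inverse (1 - fps_const (2 * x) * fps_X + fps_X ^ 2) = Abs_fps (U x)"
    by (rule fps_inverse_unique[OF U_fps])
  then show ?thesis unfolding chebU_def by simp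
qed

lemma recA:
  fixes v w :: "nat \<Rightarrow> 'a::idom"
  assumes hv: "\<And>n. v (n+2) = 2*b*v(n+1) - v n" and hw: "\<And>n. w(n+2) = 2*c*w(n+1) - w n"
  shows "v(n+4)*w(n+4) = (4*b*c)*(v(n+3)*w(n+3)) - (4*b^2+4*c^2-2)*(v(n+2)*w(n+2)) + (4*b*c)*(v(n+1)*w(n+1)) - v n * w n"
proof -
  have v2: "v(n+2) = 2*b*v(n+1) - v n" using hv[of n] .
  have v3: "v(n+3) = 2*b*v(n+2) - v(n+1)" using hv[of "n+1"] by (simp only: add.assoc numeral_plus_numeral numeral_plus_one one_plus_numeral semiring_norm one_add_one)
  have v4: "v(n+4) = 2*b*v(n+3) - v(n+2)" using hv[of "n+2"] by (simp only: add.assoc numeral_plus_numeral numeral_plus_one one_plus_numeral semiring_norm one_add_one)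
  have w2: "w(n+2) = 2*c*w(n+1) - w n" using hw[of n] .
  have w3: "w(n+3) = 2*c*w(n+2) - w(n+1)" using hw[of "n+1"] by (simp only: add.assoc numeral_plus_numeral numeral_plus_one one_plus_numeral semiring_norm one_add_one)
  have w4: "w(n+4) = 2*c*w(n+3) - w(n+2)" using hw[of "n+2"] by (simp only: add.assoc numeral_plus_numeral numeral_plus_one one_plus_numeral semiring_norm one_add_one)
  show ?thesis unfolding v4 v3 v2 w4 w3 w2 by algebra
qed

lemma recB:
  fixes u G :: "nat \<Rightarrow> 'a::idom"
  assumes hu: "\<And>n. u (n+2) = 2*a*u(n+1) - u n"
    and hG: "\<And>n. G (n+4) = p*G(n+3) - q*G(n+2) + p*G(n+1) - G n"
  shows "u (n+8) * G (n+8) + (1) * (u n * G n) + (-(2*a*p)) * (u (n+1) * G (n+1)) + (4*a^2*q + p^2 - 2*q) * (u (n+2) * G (n+2)) + (-(8*a^3*p) - 2*a*p*q + 6*a*p) * (u (n+3) * G (n+3)) + (16*a^4 + 4*a^2*p^2 - 16*a^2 - 2*p^2 + q^2 + 2) * (u (n+4) * G (n+4)) + (-(8*a^3*p) - 2*a*p*q + 6*a*p) * (u (n+5) * G (n+5)) + (4*a^2*q + p^2 - 2*q) * (u (n+6) * G (n+6)) + (-(2*a*p)) * (u (n+7) * G (n+7)) = 0"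
proof -
  have u2: "u (n+2) = (2*a) * u (n+1) - (1) * u n"
  proof -
    have h: "u (n+2) = 2*a*u (n+1) - u n" using hu[of n] by (simp only: add.assoc numeral_plus_numeral numeral_plus_one one_plus_numeral semiring_norm one_add_one)
    show ?thesis unfolding h by simp
  qed
  have u3: "u (n+3) = (4*a^2 - 1) * u (n+1) - (2*a) * u n"
  proof -
    have h: "u (n+3) = 2*a*u (n+2) - u (n+1)" using hu[of "n+1"] by (simp only: add.assoc numeral_plus_numeral numeral_plus_one one_plus_numeral semiring_norm one_add_one)
    show ?thesis unfolding h u2 by algebra
  qed
  have u4: "u (n+4) = (8*a^3 - 4*a) * u (n+1) - (4*a^2 - 1) * u n"
  proof -
    have h: "u (n+4) = 2*a*u (n+3) - u (n+2)" using hu[of "n+2"] by (simp only: add.assoc numeral_plus_numeral numeral_plus_one one_plus_numeral semiring_norm one_add_one)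
    show ?thesis unfolding h u3 u2 by algebra
  qed
  have u5: "u (n+5) = (16*a^4 - 12*a^2 + 1) * u (n+1) - (8*a^3 - 4*a) * u n"
  proof -
    have h: "u (n+5) = 2*a*u (n+4) - u (n+3)" using hu[of "n+3"] by (simp only: add.assoc numeral_plus_numeral numeral_plus_one one_plus_numeral semiring_norm one_add_one)
    show ?thesis unfolding h u4 u3 by algebra
  qed
  have u6: "u (n+6) = (32*a^5 - 32*a^3 + 6*a) * u (n+1) - (16*a^4 - 12*a^2 + 1) * u n"
  proof -
    have h: "u (n+6) = 2*a*u (n+5) - u (n+4)" using hu[of "n+4"] by (simp only: add.assoc numeral_plus_numeral numeral_plus_one one_plus_numeral semiring_norm one_add_one)
    show ?thesis unfolding h u5 u4 by algebra
  qed
  have u7: "u (n+7) = (64*a^6 - 80*a^4 + 24*a^2 - 1) * u (n+1) - (32*a^5 - 32*a^3 + 6*a) * u n"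
  proof -
    have h: "u (n+7) = 2*a*u (n+6) - u (n+5)" using hu[of "n+5"] by (simp only: add.assoc numeral_plus_numeral numeral_plus_one one_plus_numeral semiring_norm one_add_one)
    show ?thesis unfolding h u6 u5 by algebra
  qed
  have u8: "u (n+8) = (128*a^7 - 192*a^5 + 80*a^3 - 8*a) * u (n+1) - (64*a^6 - 80*a^4 + 24*a^2 - 1) * u n"
  proof -
    have h: "u (n+8) = 2*a*u (n+7) - u (n+6)" using hu[of "n+6"] by (simp only: add.assoc numeral_plus_numeral numeral_plus_one one_plus_numeral semiring_norm one_add_one)
    show ?thesis unfolding h u7 u6 by algebra
  qed
  have g4: "G (n+4) = (-(1)) * G n + (p) * G (n+1) + (-(q)) * G (n+2) + (p) * G (n+3)"
  proof -
    have h: "G (n+4) = p*G(n+3) - q*G(n+2) + p*G(n+1) - G n" using hG[of n] by (simp only: add.assoc numeral_plus_numeral numeral_plus_one one_plus_numeral semiring_norm one_add_one)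
    show ?thesis unfolding h  by algebra
  qed
  have g5: "G (n+5) = (-(p)) * G n + (p^2 - 1) * G (n+1) + (-(p*q) + p) * G (n+2) + (p^2 - q) * G (n+3)"
  proof -
    have h: "G (n+5) = p*G(n+4) - q*G(n+3) + p*G(n+2) - G (n+1)" using hG[of "n+1"] by (simp only: add.assoc numeral_plus_numeral numeral_plus_one one_plus_numeral semiring_norm one_add_one)
    show ?thesis unfolding h g4 by algebra
  qed
  have g6: "G (n+6) = (-(p^2) + q) * G n + (p^3 - p*q - p) * G (n+1) + (-(p^2*q) + p^2 + q^2 - 1) * G (n+2) + (p^3 - 2*p*q + p) * G (n+3)"
  proof -
    have h: "G (n+6) = p*G(n+5) - q*G(n+4) + p*G(n+3) - G (n+2)" using hG[of "n+2"] by (simp only: add.assoc numeral_plus_numeral numeral_plus_one one_plus_numeral semiring_norm one_add_one)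
    show ?thesis unfolding h g4 g5 by algebra
  qed
  have g7: "G (n+7) = (-(p^3) + 2*p*q - p) * G n + (p^4 - 2*p^2*q + q) * G (n+1) + (-(p^3*q) + p^3 + 2*p*q^2 - 2*p*q - p) * G (n+2) + (p^4 - 3*p^2*q + 2*p^2 + q^2 - 1) * G (n+3)"
  proof -
    have h: "G (n+7) = p*G(n+6) - q*G(n+5) + p*G(n+4) - G (n+3)" using hG[of "n+3"] by (simp only: add.assoc numeral_plus_numeral numeral_plus_one one_plus_numeral semiring_norm one_add_one)
    show ?thesis unfolding h g4 g5 g6 by algebra
  qed
  have g8: "G (n+8) = (-(p^4) + 3*p^2*q - 2*p^2 - q^2 + 1) * G n + (p^5 - 3*p^3*q + p^3 + p*q^2 + 2*p*q - 2*p) * G (n+1) + (-(p^4*q) + p^4 + 3*p^2*q^2 - 4*p^2*q - q^3 + 2*q) * G (n+2) + (p^5 - 4*p^3*q + 3*p^3 + 3*p*q^2 - 2*p*q - 2*p) * G (n+3)"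
  proof -
    have h: "G (n+8) = p*G(n+7) - q*G(n+6) + p*G(n+5) - G (n+4)" using hG[of "n+4"] by (simp only: add.assoc numeral_plus_numeral numeral_plus_one one_plus_numeral semiring_norm one_add_one)
    show ?thesis unfolding h g4 g5 g6 g7 by algebra
  qed
  show ?thesis
    unfolding u2 u3 u4 u5 u6 u7 u8 g4 g5 g6 g7 g8
    by algebra
qed

definition Fs :: "'a::field \<Rightarrow> 'a \<Rightarrow> 'a \<Rightarrow> nat \<Rightarrow> 'a" where
  "Fs a b c n = U a n * U b n * U c n"

lemma rec8:
  fixes a b c :: "'a::field"
  shows "Fs a b c (m+8) - (8*a*b*c) * Fs a b c (m+7)
       + (16*a^2*b^2 + 16*a^2*c^2 - 8*a^2 + 16*b^2*c^2 - 8*b^2 - 8*c^2 + 4) * Fs a b c (m+6)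
       + (-32*a^3*b*c + 40*a*b*c - 32*a*b^3*c - 32*a*b*c^3) * Fs a b c (m+5)
       + (16*a^4 + 64*a^2*b^2*c^2 - 16*a^2 + 16*b^4 - 16*b^2 + 6 + 16*c^4 - 16*c^2) * Fs a b c (m+4)
       + (-32*a^3*b*c + 40*a*b*c - 32*a*b^3*c - 32*a*b*c^3) * Fs a b c (m+3)
       + (16*a^2*b^2 + 16*a^2*c^2 - 8*a^2 + 16*b^2*c^2 - 8*b^2 - 8*c^2 + 4) * Fs a b c (m+2)
       - (8*a*b*c) * Fs a b c (m+1) + Fs a b c m = 0"
proof -
  have hG: "\<And>n. U b (n+4) * U c (n+4) = (4*b*c) * (U b (n+3) * U c (n+3)) - (4*b^2+4*c^2-2) * (U b (n+2) * U c (n+2)) + (4*b*c) * (U b (n+1) * U c (n+1)) - U b n * U c n"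
    by (rule recA) (rule U_rec)+
  note H = recB[where u="U a" and G="\<lambda>n. U b n * U c n" and a=a and p="4*b*c" and q="4*b^2+4*c^2-2" and n=m, OF U_rec hG]
  show ?thesis using H unfolding Fs_def by algebra
qed

lemma nthcX: fixes f :: "'a::comm_ring_1 fps" shows "fps_nth (f * (fps_const c * fps_X^k)) n = c * (if n < k then 0 else fps_nth f (n-k))"
proof -
  have "f * (fps_const c * fps_X^k) = fps_const c * (f * fps_X^k)" by (simp add: ac_simps)
  then show ?thesis unfolding \<open>f * (fps_const c * fps_X^k) = fps_const c * (f * fps_X^k)\<close> by (simp add: fps_X_power_mult_right_nth)
qed

lemma nthcX1: fixes f :: "'a::comm_ring_1 fps" shows "fps_nth (f * (fps_const c * fps_X)) n = c * (if n < 1 then 0 else fps_nth f (n-1))"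
  using nthcX[of f c 1 n] by simp

theorem mainTheorem1:
  fixes a b c :: "'a::field"
  shows "Abs_fps (\<lambda>n. chebU a n * chebU b n * chebU c n) =
    (1 + fps_const (-4*a^2 - 4*b^2 - 4*c^2 + 3) * fps_X^2
       + fps_const (16*a*b*c) * fps_X^3
       + fps_const (-4*a^2 - 4*b^2 - 4*c^2 + 3) * fps_X^4 + fps_X^6)
    / (fps_X^8 - fps_const (8*a*b*c) * fps_X^7
       + fps_const (16*a^2*b^2 + 16*a^2*c^2 - 8*a^2 + 16*b^2*c^2 - 8*b^2 - 8*c^2 + 4) * fps_X^6
       + fps_const (-32*a^3*b*c + 40*a*b*c - 32*a*b^3*c - 32*a*b*c^3) * fps_X^5
       + fps_const (16*a^4 + 64*a^2*b^2*c^2 - 16*a^2 + 16*b^4 - 16*b^2 + 6 + 16*c^4 - 16*c^2) * fps_X^4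
       + fps_const (-32*a^3*b*c + 40*a*b*c - 32*a*b^3*c - 32*a*b*c^3) * fps_X^3
       + fps_const (16*a^2*b^2 + 16*a^2*c^2 - 8*a^2 + 16*b^2*c^2 - 8*b^2 - 8*c^2 + 4) * fps_X^2
       - fps_const (8*a*b*c) * fps_X + 1)"
proof -
  have FF: "Abs_fps (\<lambda>n. chebU a n * chebU b n * chebU c n) = Abs_fps (Fs a b c)"
    by (rule arg_cong[where f=Abs_fps]) (simp add: fun_eq_iff chebU_U Fs_def)
  have key: "Abs_fps (Fs a b c) * (fps_X^8 - fps_const (8*a*b*c) * fps_X^7
       + fps_const (16*a^2*b^2 + 16*a^2*c^2 - 8*a^2 + 16*b^2*c^2 - 8*b^2 - 8*c^2 + 4) * fps_X^6
       + fps_const (-32*a^3*b*c + 40*a*b*c - 32*a*b^3*c - 32*a*b*c^3) * fps_X^5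
       + fps_const (16*a^4 + 64*a^2*b^2*c^2 - 16*a^2 + 16*b^4 - 16*b^2 + 6 + 16*c^4 - 16*c^2) * fps_X^4
       + fps_const (-32*a^3*b*c + 40*a*b*c - 32*a*b^3*c - 32*a*b*c^3) * fps_X^3
       + fps_const (16*a^2*b^2 + 16*a^2*c^2 - 8*a^2 + 16*b^2*c^2 - 8*b^2 - 8*c^2 + 4) * fps_X^2
       - fps_const (8*a*b*c) * fps_X + 1) = (1 + fps_const (-4*a^2 - 4*b^2 - 4*c^2 + 3) * fps_X^2
       + fps_const (16*a*b*c) * fps_X^3
       + fps_const (-4*a^2 - 4*b^2 - 4*c^2 + 3) * fps_X^4 + fps_X^6)"
  proof (rule fps_ext)
    fix n
    show "fps_nth (Abs_fps (Fs a b c) * (fps_X^8 - fps_const (8*a*b*c) * fps_X^7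
       + fps_const (16*a^2*b^2 + 16*a^2*c^2 - 8*a^2 + 16*b^2*c^2 - 8*b^2 - 8*c^2 + 4) * fps_X^6
       + fps_const (-32*a^3*b*c + 40*a*b*c - 32*a*b^3*c - 32*a*b*c^3) * fps_X^5
       + fps_const (16*a^4 + 64*a^2*b^2*c^2 - 16*a^2 + 16*b^4 - 16*b^2 + 6 + 16*c^4 - 16*c^2) * fps_X^4
       + fps_const (-32*a^3*b*c + 40*a*b*c - 32*a*b^3*c - 32*a*b*c^3) * fps_X^3
       + fps_const (16*a^2*b^2 + 16*a^2*c^2 - 8*a^2 + 16*b^2*c^2 - 8*b^2 - 8*c^2 + 4) * fps_X^2
       - fps_const (8*a*b*c) * fps_X + 1)) n = fps_nth (1 + fps_const (-4*a^2 - 4*b^2 - 4*c^2 + 3) * fps_X^2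
       + fps_const (16*a*b*c) * fps_X^3
       + fps_const (-4*a^2 - 4*b^2 - 4*c^2 + 3) * fps_X^4 + fps_X^6) n"
    proof (cases "n < 8")
      case False
      then have "\<exists>m. n = m + 8" by presburger
      then obtain m where n: "n = m + 8" by blast
      have e: "m+8-1 = m+7" "m+8-2 = m+6" "m+8-3 = m+5" "m+8-4 = m+4" "m+8-5 = m+3" "m+8-6 = m+2" "m+8-7 = m+1" "m+8-8 = m" by simp_all
      have c: "\<not> m+8 < 1" "\<not> m+8 < 2" "\<not> m+8 < 3" "\<not> m+8 < 4" "\<not> m+8 < 5" "\<not> m+8 < 6" "\<not> m+8 < 7" "\<not> m+8 < 8" "m+8 \<noteq> 0" "m+8 \<noteq> 6" "m+6 \<noteq> 0" "m+5 \<noteq> 0" "m+4 \<noteq> 0" by simp_all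
      show ?thesis unfolding n
        apply (simp only: distrib_left right_diff_distrib mult_1_right fps_add_nth fps_sub_nth nthcX nthcX1 fps_X_power_mult_right_nth fps_nth_Abs_fps)
        apply (simp only: e c if_False if_True fps_nth_fps_const fps_one_nth fps_X_power_nth)
        using rec8[of a b c m] by algebra
    next
      case True
      then consider "n = 0" | "n = 1" | "n = 2" | "n = 3" | "n = 4" | "n = 5" | "n = 6" | "n = 7" by linarith
      then show ?thesis
      proof cases
        case 1
        show ?thesis unfolding \<open>n = 0\<close>
          apply (simp only: distrib_left right_diff_distrib mult_1_right fps_add_nth fps_sub_nth nthcX nthcX1 fps_X_power_mult_right_nth fps_nth_Abs_fps)
          by (simp add: Fs_def eval_nat_numeral; algebra)
      next
        case 2
        show ?thesis unfolding \<open>n = 1\<close>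
          apply (simp only: distrib_left right_diff_distrib mult_1_right fps_add_nth fps_sub_nth nthcX nthcX1 fps_X_power_mult_right_nth fps_nth_Abs_fps)
          by (simp add: Fs_def eval_nat_numeral; algebra)
      next
        case 3
        show ?thesis unfolding \<open>n = 2\<close>
          apply (simp only: distrib_left right_diff_distrib mult_1_right fps_add_nth fps_sub_nth nthcX nthcX1 fps_X_power_mult_right_nth fps_nth_Abs_fps)
          by (simp add: Fs_def eval_nat_numeral; algebra)
      next
        case 4
        show ?thesis unfolding \<open>n = 3\<close>
          apply (simp only: distrib_left right_diff_distrib mult_1_right fps_add_nth fps_sub_nth nthcX nthcX1 fps_X_power_mult_right_nth fps_nth_Abs_fps)
          by (simp add: Fs_def eval_nat_numeral; algebra)
      next
        case 5
        show ?thesis unfolding \<open>n = 4\<close>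
          apply (simp only: distrib_left right_diff_distrib mult_1_right fps_add_nth fps_sub_nth nthcX nthcX1 fps_X_power_mult_right_nth fps_nth_Abs_fps)
          by (simp add: Fs_def eval_nat_numeral; algebra)
      next
        case 6
        show ?thesis unfolding \<open>n = 5\<close>
          apply (simp only: distrib_left right_diff_distrib mult_1_right fps_add_nth fps_sub_nth nthcX nthcX1 fps_X_power_mult_right_nth fps_nth_Abs_fps)
          by (simp add: Fs_def eval_nat_numeral; algebra)
      next
        case 7
        show ?thesis unfolding \<open>n = 6\<close>
          apply (simp only: distrib_left right_diff_distrib mult_1_right fps_add_nth fps_sub_nth nthcX nthcX1 fps_X_power_mult_right_nth fps_nth_Abs_fps)
          by (simp add: Fs_def eval_nat_numeral; algebra)
      next
        case 8
        show ?thesis unfolding \<open>n = 7\<close>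
          apply (simp only: distrib_left right_diff_distrib mult_1_right fps_add_nth fps_sub_nth nthcX nthcX1 fps_X_power_mult_right_nth fps_nth_Abs_fps)
          by (simp add: Fs_def eval_nat_numeral; algebra)
      qed
    qed
  qed
  have D0: "fps_nth (fps_X^8 - fps_const (8*a*b*c) * fps_X^7
       + fps_const (16*a^2*b^2 + 16*a^2*c^2 - 8*a^2 + 16*b^2*c^2 - 8*b^2 - 8*c^2 + 4) * fps_X^6
       + fps_const (-32*a^3*b*c + 40*a*b*c - 32*a*b^3*c - 32*a*b*c^3) * fps_X^5
       + fps_const (16*a^4 + 64*a^2*b^2*c^2 - 16*a^2 + 16*b^4 - 16*b^2 + 6 + 16*c^4 - 16*c^2) * fps_X^4
       + fps_const (-32*a^3*b*c + 40*a*b*c - 32*a*b^3*c - 32*a*b*c^3) * fps_X^3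
       + fps_const (16*a^2*b^2 + 16*a^2*c^2 - 8*a^2 + 16*b^2*c^2 - 8*b^2 - 8*c^2 + 4) * fps_X^2
       - fps_const (8*a*b*c) * fps_X + 1) 0 \<noteq> 0" by simp
  show ?thesis unfolding FF fps_divide_unit[OF D0] key[symmetric]
    using inverse_mult_eq_1'[OF D0] by (simp add: mult.assoc)
qed

end
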